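(* Let $d=n\ge2$ and let $P_1,\dots,P_d$ be real quadratic forms on $\mathbb{R}^d$ such that $\det[\nabla P_1(t);\dots;\nabla P_d(t)]\not\equiv0$ as a polynomial in $t$. Let $V\subset\mathbb{R}^{2d}$ be a linear subspace. (1) If $\dim V$ is odd, then $\{t:\dim(\pi_t(V))<(\dim V+1)/2\}$ is contained in the zero set of a nonzero polynomial of degree at most $d$. (2) If $\dim V$ is even, then either $\{t:\dim(\pi_t(V))<\dim V/2+1\}$ is contained in the zero set of a nonzero polynomial of degree at most $d$, or $\dim(\pi_t(V))\ge\dim V/2$ for all $t\in\mathbb{R}^d$.
   Context: For $t\in\mathbb{R}^d$, $V(t)\subset\mathbb{R}^{2d}$ is the linear subspace spanned by $(e_j,\partial_jP_1(t),\dots,\partial_jP_d(t))$, $j=1,\dots,d$, and $\pi_t$ is the orthogonal projection onto $V(t)$. *)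

theory Defs
  imports "HOL-Analysis.Analysis"
begin

definition quad_form :: "real^'n^'n \<Rightarrow> real^'n \<Rightarrow> real" where
  "quad_form A t = t \<bullet> (A *v t)"

definition partial_deriv :: "'n \<Rightarrow> (real^'n \<Rightarrow> real) \<Rightarrow> real^'n \<Rightarrow> real" where
  "partial_deriv j f t = deriv (\<lambda>s. f (t + s *\<^sub>R axis j 1)) 0"

definition orth_proj :: "'a::real_inner set \<Rightarrow> 'a \<Rightarrow> 'a" where
  "orth_proj W x = (THE p. p \<in> W \<and> (\<forall>w\<in>W. (x - p) \<bullet> w = 0))"

definition multi_indices :: "nat \<Rightarrow> ('n::finite \<Rightarrow> nat) set" where
  "multi_indices k = {\<alpha>. (\<Sum>i\<in>UNIV. \<alpha> i) \<le> k}"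

definition poly_eval :: "nat \<Rightarrow> (('n::finite \<Rightarrow> nat) \<Rightarrow> real) \<Rightarrow> real^'n \<Rightarrow> real" where
  "poly_eval k c t = (\<Sum>\<alpha>\<in>multi_indices k. c \<alpha> * (\<Prod>i\<in>UNIV. (t $ i) ^ (\<alpha> i)))"

definition in_nonzero_poly_zero_set :: "nat \<Rightarrow> (real^'n::finite) set \<Rightarrow> bool" where
  "in_nonzero_poly_zero_set k S \<longleftrightarrow>
     (\<exists>c. (\<exists>\<alpha>\<in>multi_indices k. c \<alpha> \<noteq> 0) \<and> (\<forall>t\<in>S. poly_eval k c t = 0))"

definition Vt :: "('n \<Rightarrow> real^'n \<Rightarrow> real) \<Rightarrow> real^'n \<Rightarrow> ((real^'n) \<times> (real^'n)) set" where
  "Vt P t = span (range (\<lambda>j. (axis j (1::real), \<chi> k. partial_deriv j (P k) t)))"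

end

theory Submission
  imports Defs
begin

definition mon :: "('n::finite \<Rightarrow> nat) \<Rightarrow> real^'n \<Rightarrow> real" where
  "mon \<alpha> t = (\<Prod>i\<in>UNIV. (t $ i) ^ (\<alpha> i))"

definition pol :: "nat \<Rightarrow> (real^'n::finite \<Rightarrow> real) \<Rightarrow> bool" where
  "pol k f \<longleftrightarrow> (\<exists>c. \<forall>t. f t = poly_eval k c t)"

lemma finite_mi: "finite (multi_indices k :: ('n::finite \<Rightarrow> nat) set)"
proof -
  have "multi_indices k \<subseteq> {\<alpha>::'n\<Rightarrow>nat. \<forall>i. \<alpha> i \<in> {..k}}"
  proof
    fix \<alpha> :: "'n \<Rightarrow> nat" assume "\<alpha> \<in> multi_indices k"
    then have s: "(\<Sum>i\<in>UNIV. \<alpha> i) \<le> k" by (simp add: multi_indices_def)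
    have "\<alpha> i \<le> (\<Sum>i\<in>UNIV. \<alpha> i)" for i by (rule member_le_sum) auto
    with s show "\<alpha> \<in> {\<alpha>::'n\<Rightarrow>nat. \<forall>i. \<alpha> i \<in> {..k}}" by (auto intro: le_trans)
  qed
  moreover have "finite {\<alpha>::'n\<Rightarrow>nat. \<forall>i. \<alpha> i \<in> {..k}}"
    using finite_PiE[of UNIV "\<lambda>_. {..k}", OF finite_class.finite_UNIV] by (simp add: PiE_UNIV_domain Pi_def)
  ultimately show ?thesis by (rule finite_subset)
qed

lemma poly_eval_alt: "poly_eval k c t = (\<Sum>\<alpha>\<in>multi_indices k. c \<alpha> * mon \<alpha> t)"
  by (simp add: poly_eval_def mon_def)

lemma pol_mon: "\<gamma> \<in> multi_indices k \<Longrightarrow> pol k (mon \<gamma>)"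
proof -
  assume g: "\<gamma> \<in> multi_indices k"
  have "mon \<gamma> t = (\<Sum>\<alpha>\<in>multi_indices k. (if \<alpha> = \<gamma> then 1 else 0) * mon \<alpha> t)" for t
  proof -
    have "(\<Sum>\<alpha>\<in>multi_indices k. (if \<alpha> = \<gamma> then 1 else 0) * mon \<alpha> t)
        = (\<Sum>\<alpha>\<in>multi_indices k. (if \<gamma> = \<alpha> then mon \<alpha> t else 0))"
      by (rule sum.cong) auto
    also have "\<dots> = mon \<gamma> t" using g by (simp add: finite_mi)
    finally show ?thesis by simp
  qed
  then show ?thesis unfolding pol_def poly_eval_alt
    by (intro exI[of _ "\<lambda>\<alpha>. if \<alpha> = \<gamma> then 1 else 0"] allI) blast
qed

lemma pol_mono: "pol k f \<Longrightarrow> k \<le> k' \<Longrightarrow> pol k' f"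
proof -
  assume "pol k f" "k \<le> k'"
  then obtain c where c: "\<And>t. f t = poly_eval k c t" by (auto simp: pol_def)
  have sub: "multi_indices k \<subseteq> multi_indices k'" using \<open>k \<le> k'\<close> by (auto simp: multi_indices_def)
  let ?c = "\<lambda>\<alpha>. if \<alpha> \<in> multi_indices k then c \<alpha> else 0"
  have "f t = poly_eval k' ?c t" for t
  proof -
    have "poly_eval k' ?c t = (\<Sum>\<alpha>\<in>multi_indices k. ?c \<alpha> * mon \<alpha> t)"
      unfolding poly_eval_alt
      by (rule sum.mono_neutral_right) (use sub finite_mi in auto)
    also have "\<dots> = f t" by (simp add: c poly_eval_alt)
    finally show ?thesis by simp
  qed
  then show ?thesis by (auto simp: pol_def)
qed

lemma pol_add: "pol k f \<Longrightarrow> pol k g \<Longrightarrow> pol k (\<lambda>t. f t + g t)"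
proof -
  assume "pol k f" "pol k g"
  then obtain c e where "\<And>t. f t = poly_eval k c t" "\<And>t. g t = poly_eval k e t" by (auto simp: pol_def)
  then have "f t + g t = poly_eval k (\<lambda>\<alpha>. c \<alpha> + e \<alpha>) t" for t
    by (simp add: poly_eval_alt sum.distrib algebra_simps)
  then show ?thesis by (auto simp: pol_def)
qed

lemma pol_scale: "pol k f \<Longrightarrow> pol k (\<lambda>t. a * f t)"
proof -
  assume "pol k f"
  then obtain c where "\<And>t. f t = poly_eval k c t" by (auto simp: pol_def)
  then have "a * f t = poly_eval k (\<lambda>\<alpha>. a * c \<alpha>) t" for t
    by (simp add: poly_eval_alt sum_distrib_left algebra_simps)
  then show ?thesis by (auto simp: pol_def)
qed

lemma pol_zero: "pol k (\<lambda>t. 0)"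
  unfolding pol_def by (rule exI[of _ "\<lambda>_. 0"]) (simp add: poly_eval_alt)

lemma pol_sum: "finite I \<Longrightarrow> (\<And>i. i \<in> I \<Longrightarrow> pol k (f i)) \<Longrightarrow> pol k (\<lambda>t. \<Sum>i\<in>I. f i t)"
  by (induction I rule: finite_induct) (auto intro: pol_add pol_zero)

lemma mon_mult: "mon \<alpha> t * mon \<beta> t = mon (\<lambda>i. \<alpha> i + \<beta> i) t"
  by (simp add: mon_def power_add prod.distrib)

lemma pol_mult:
  fixes f g :: "real^'n::finite \<Rightarrow> real"
  shows "pol a f \<Longrightarrow> pol b g \<Longrightarrow> pol (a + b) (\<lambda>t. f t * g t)"
proof -
  assume "pol a f" "pol b g"
  then obtain c e where c: "\<And>t. f t = poly_eval a c t" and e: "\<And>t. g t = poly_eval b e t" by (auto simp: pol_def)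
  have eq: "f t * g t = (\<Sum>\<alpha>\<in>multi_indices a. \<Sum>\<beta>\<in>multi_indices b. c \<alpha> * e \<beta> * mon (\<lambda>i. \<alpha> i + \<beta> i) t)" for t
    by (simp add: c e poly_eval_alt sum_product mon_mult[symmetric] algebra_simps)
  have "pol (a+b) (\<lambda>t. \<Sum>\<alpha>\<in>multi_indices a. \<Sum>\<beta>\<in>multi_indices b. c \<alpha> * e \<beta> * mon (\<lambda>i. \<alpha> i + \<beta> i) t)"
  proof (intro pol_sum finite_mi pol_scale pol_mon)
    fix \<alpha> \<beta> :: "'n \<Rightarrow> nat" assume "\<alpha> \<in> multi_indices a" "\<beta> \<in> multi_indices b"
    then show "(\<lambda>i. \<alpha> i + \<beta> i) \<in> multi_indices (a + b)"
      by (simp add: multi_indices_def sum.distrib)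
  qed
  then show ?thesis by (simp add: eq)
qed

lemma pol_const: "pol k (\<lambda>t::real^'n::finite. a)"
proof -
  have "pol 0 (mon (\<lambda>_::'n. 0))" by (rule pol_mon) (simp add: multi_indices_def)
  then have "pol 0 (\<lambda>t. a * mon (\<lambda>_::'n. 0) t)" by (rule pol_scale)
  moreover have "(\<lambda>t. a * mon (\<lambda>_::'n. 0) t) = (\<lambda>t. a)" by (simp add: mon_def)
  ultimately have "pol 0 (\<lambda>t::real^'n. a)" by simp
  then show ?thesis by (rule pol_mono) simp
qed

lemma pol_coord: "pol 1 (\<lambda>t. t $ i)"
proof -
  have "pol 1 (mon (\<lambda>j. if j = i then 1 else 0))"
    by (rule pol_mon) (simp add: multi_indices_def)
  moreover have "mon (\<lambda>j. if j = i then 1 else 0) t = t $ i" for t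
    by (simp add: mon_def if_distrib cong: if_cong)
  then have "mon (\<lambda>j. if j = i then 1 else 0) = (\<lambda>t. t $ i)" by (rule ext)
  ultimately show ?thesis by simp
qed

lemma pol_inner: "pol 1 (\<lambda>t. t \<bullet> c)"
proof -
  have "pol (1+0) (\<lambda>t. t $ i * c $ i)" for i by (rule pol_mult[OF pol_coord pol_const])
  then have "pol 1 (\<lambda>t. \<Sum>i\<in>UNIV. t $ i * c $ i)" by (intro pol_sum) auto
  then show ?thesis by (simp add: inner_vec_def)
qed

lemma pol_prod: "finite I \<Longrightarrow> (\<And>i. i \<in> I \<Longrightarrow> pol 1 (f i)) \<Longrightarrow> pol (card I) (\<lambda>t. \<Prod>i\<in>I. f i t)"
proof (induction I rule: finite_induct)
  case empty then show ?case by (simp add: pol_const)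
next
  case (insert x F)
  then have "pol (1 + card F) (\<lambda>t. f x t * (\<Prod>i\<in>F. f i t))" by (intro pol_mult) auto
  with insert show ?case by simp
qed

lemma pol_det:
  fixes M :: "real^'n::finite \<Rightarrow> real^'n^'n"
  assumes "\<And>i j. pol 1 (\<lambda>t. M t $ i $ j)"
  shows "pol CARD('n) (\<lambda>t. det (M t))"
  unfolding det_def
  by (intro pol_sum pol_scale pol_prod assms) auto

lemma pol_nonzero:
  assumes "pol k f" "f t1 \<noteq> 0" "\<And>t. t \<in> S \<Longrightarrow> f t = 0"
  shows "in_nonzero_poly_zero_set k S"
proof -
  from assms obtain c where c: "\<And>t. f t = poly_eval k c t" by (auto simp: pol_def)
  have "\<exists>\<alpha>\<in>multi_indices k. c \<alpha> \<noteq> 0"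
  proof (rule ccontr)
    assume "\<not> ?thesis"
    then have "poly_eval k c t1 = 0" by (simp add: poly_eval_def)
    with c assms(2) show False by simp
  qed
  with c assms(3) show ?thesis unfolding in_nonzero_poly_zero_set_def by auto
qed

lemma pd_quad:
  fixes M :: "real^'n::finite^'n"
  shows "partial_deriv j (quad_form M) t = t \<bullet> (M *v axis j 1 + transpose M *v axis j 1)"
proof -
  define e :: "real^'n" where "e = axis j 1"
  have eq: "(\<lambda>s. quad_form M (t + s *\<^sub>R e)) =
     (\<lambda>s. t \<bullet> (M *v t) + s * (t \<bullet> (M *v e) + e \<bullet> (M *v t)) + s^2 * (e \<bullet> (M *v e)))"
    by (rule ext) (simp add: quad_form_def matrix_vector_right_distrib matrix_vector_mult_scaleR
        inner_add_left inner_add_right power2_eq_square algebra_simps)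
  have d: "((\<lambda>s. t \<bullet> (M *v t) + s * (t \<bullet> (M *v e) + e \<bullet> (M *v t)) + s^2 * (e \<bullet> (M *v e)))
      has_real_derivative (t \<bullet> (M *v e) + e \<bullet> (M *v t))) (at 0)"
    by (auto intro!: derivative_eq_intros)
  have "e \<bullet> (M *v t) = t \<bullet> (transpose M *v e)"
    by (metis dot_lmul_matrix inner_commute transpose_matrix_vector)
  then show ?thesis
    unfolding partial_deriv_def e_def[symmetric] eq using DERIV_imp_deriv[OF d]
    by (simp add: inner_add_right)
qed

lemma op_unique:
  fixes X :: "'a::euclidean_space set"
  assumes "p \<in> span X" "\<forall>w\<in>span X. (x - p) \<bullet> w = 0" "q \<in> span X" "\<forall>w\<in>span X. (x - q) \<bullet> w = 0"
  shows "p = q"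
proof -
  have "p - q \<in> span X" using assms by (simp add: span_diff)
  then have "(x - q) \<bullet> (p - q) - (x - p) \<bullet> (p - q) = 0" using assms by simp
  then have "(p - q) \<bullet> (p - q) = 0" by (simp add: inner_diff_left)
  then show ?thesis by simp
qed

lemma op_ex:
  fixes X :: "'a::euclidean_space set"
  shows "\<exists>p. p \<in> span X \<and> (\<forall>w\<in>span X. (x - p) \<bullet> w = 0)"
proof -
  obtain y z where "y \<in> span X" "\<And>w. w \<in> span X \<Longrightarrow> orthogonal z w" "x = y + z"
    using orthogonal_subspace_decomp_exists by blast
  then show ?thesis by (intro exI[of _ y]) (auto simp: orthogonal_def)
qed

lemma op_eq:
  fixes X :: "'a::euclidean_space set"
  assumes "p \<in> span X" "\<forall>w\<in>span X. (x - p) \<bullet> w = 0"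
  shows "orth_proj (span X) x = p"
  unfolding orth_proj_def
  by (rule the_equality) (use assms op_unique in blast)+

lemma op_prop:
  fixes X :: "'a::euclidean_space set"
  shows "orth_proj (span X) x \<in> span X \<and> (\<forall>w\<in>span X. (x - orth_proj (span X) x) \<bullet> w = 0)"
proof -
  obtain p where "p \<in> span X" "\<forall>w\<in>span X. (x - p) \<bullet> w = 0" using op_ex by blast
  with op_eq[OF this] show ?thesis by simp
qed

lemma op_linear:
  fixes X :: "'a::euclidean_space set"
  shows "linear (orth_proj (span X))"
proof (rule linearI)
  fix x y
  show "orth_proj (span X) (x + y) = orth_proj (span X) x + orth_proj (span X) y"
    using op_prop[of X x] op_prop[of X y]
    by (intro op_eq) (auto simp: span_add inner_diff_left inner_add_left algebra_simps)
next
  fix c x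
  show "orth_proj (span X) (c *\<^sub>R x) = c *\<^sub>R orth_proj (span X) x"
  proof (intro op_eq)
    show "c *\<^sub>R orth_proj (span X) x \<in> span X" using op_prop[of X x] by (simp add: span_mul)
    show "\<forall>w\<in>span X. (c *\<^sub>R x - c *\<^sub>R orth_proj (span X) x) \<bullet> w = 0"
      using op_prop[of X x] by (metis inner_scaleR_left mult_zero_right scaleR_right_diff_distrib)
  qed
qed

lemma op_zero_iff:
  fixes X :: "'a::euclidean_space set"
  shows "orth_proj (span X) x = 0 \<longleftrightarrow> (\<forall>w\<in>X. x \<bullet> w = 0)"
proof
  assume "orth_proj (span X) x = 0"
  then show "\<forall>w\<in>X. x \<bullet> w = 0" using op_prop[of X x] by (auto simp: span_base)
next
  assume h: "\<forall>w\<in>X. x \<bullet> w = 0"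
  have "\<forall>w\<in>span X. x \<bullet> w = 0"
    using orthogonal_to_span[of _ X x] h by (auto simp: orthogonal_def)
  then show "orth_proj (span X) x = 0" by (intro op_eq) (auto simp: span_zero)
qed

lemma fam_dim:
  fixes x :: "'i \<Rightarrow> 'a::euclidean_space"
  assumes S: "finite S" and sub: "x ` S \<subseteq> U"
    and ind: "\<And>a. (\<Sum>i\<in>S. a i *\<^sub>R x i) = 0 \<Longrightarrow> \<forall>i\<in>S. a i = 0"
  shows "card S \<le> dim U"
proof -
  have inj: "inj_on x S"
  proof (rule inj_onI, rule ccontr)
    fix i j assume ij: "i \<in> S" "j \<in> S" "x i = x j" "i \<noteq> j"
    define a where "a = (\<lambda>k. if k = i then (1::real) else if k = j then -1 else 0)"
    have "\<And>k. a k *\<^sub>R x k = (if k = i then x i else 0) - (if k = j then x j else 0)"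
      using ij by (auto simp: a_def)
    then have "(\<Sum>k\<in>S. a k *\<^sub>R x k) = x i - x j"
      using S ij by (simp add: sum_subtractf)
    then have "\<forall>k\<in>S. a k = 0" using ij by (intro ind) simp
    with ij show False by (auto simp: a_def)
  qed
  have "independent (x ` S)"
  proof
    assume "dependent (x ` S)"
    then obtain u where u: "\<exists>v\<in>x ` S. u v \<noteq> 0" "(\<Sum>v\<in>x ` S. u v *\<^sub>R v) = 0"
      using dependent_finite[of "x ` S"] S by auto
    have "(\<Sum>i\<in>S. u (x i) *\<^sub>R x i) = 0" using u(2) by (simp add: sum.reindex[OF inj])
    then have "\<forall>i\<in>S. u (x i) = 0" by (rule ind)
    with u(1) show False by auto
  qed
  then have "card (x ` S) \<le> dim U" using sub by (rule independent_card_le_dim[rotated])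
  with card_image[OF inj] show ?thesis by simp
qed

lemma bij_indep:
  fixes e :: "'i \<Rightarrow> 'a::euclidean_space"
  assumes S: "finite S" and bij: "bij_betw e S B" and B: "independent B"
    and sum0: "(\<Sum>i\<in>S. a i *\<^sub>R e i) = 0" and i: "i \<in> S"
  shows "a i = 0"
proof -
  have fB: "finite B" using bij S bij_betw_finite by blast
  let ?u = "\<lambda>b. a (inv_into S e b)"
  have inj: "inj_on e S" and im: "e ` S = B" using bij by (auto simp: bij_betw_def)
  have "(\<Sum>b\<in>B. ?u b *\<^sub>R b) = (\<Sum>i\<in>S. ?u (e i) *\<^sub>R e i)"
    using im sum.reindex[OF inj, of "\<lambda>b. ?u b *\<^sub>R b"] by simp
  also have "\<dots> = (\<Sum>i\<in>S. a i *\<^sub>R e i)"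
    by (rule sum.cong) (auto simp: inv_into_f_f[OF inj])
  finally have "(\<Sum>b\<in>B. ?u b *\<^sub>R b) = 0" using sum0 by simp
  then have "\<forall>b\<in>B. ?u b = 0" using B fB dependent_finite[of B] by auto
  then have "?u (e i) = 0" using i im by auto
  then show ?thesis by (simp add: inv_into_f_f[OF inj i])
qed

lemma det_ker:
  fixes M :: "real^'n::finite^'n"
  shows "det M \<noteq> 0 \<longleftrightarrow> (\<forall>x. M *v x = 0 \<longrightarrow> x = 0)"
proof
  assume "det M \<noteq> 0"
  then have "invertible M" by (simp add: invertible_det_nz)
  then have "\<exists>B. B ** M = mat 1" by (auto simp: invertible_def)
  then show "\<forall>x. M *v x = 0 \<longrightarrow> x = 0" by (simp add: matrix_left_invertible_ker)
next
  assume "\<forall>x. M *v x = 0 \<longrightarrow> x = 0"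
  then obtain B where "B ** M = mat 1" using matrix_left_invertible_ker by blast
  then have "M ** B = mat 1" using matrix_left_right_inverse by blast
  with \<open>B ** M = mat 1\<close> have "invertible M" by (auto simp: invertible_def)
  then show "det M \<noteq> 0" by (simp add: invertible_det_nz)
qed

lemma sum_UNIV_S:
  fixes f :: "'n::finite \<Rightarrow> real"
  assumes "\<And>i. i \<notin> S \<Longrightarrow> f i = 0"
  shows "(\<Sum>i\<in>UNIV. f i) = (\<Sum>i\<in>S. f i)"
  by (rule sum.mono_neutral_right) (use assms in auto)

lemma generic:
  fixes G :: "real^'n::finite \<Rightarrow> 'n \<Rightarrow> 'v::euclidean_space"
    and V :: "'v set"
  assumes polG: "\<And>v j. pol 1 (\<lambda>t. v \<bullet> G t j)"
    and t1: "\<tau> \<le> dim (orth_proj (span (range (G t1))) ` V)"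
  shows "in_nonzero_poly_zero_set CARD('n) {t. dim (orth_proj (span (range (G t))) ` V) < \<tau>}"
proof -
  define \<pi> where "\<pi> t = orth_proj (span (range (G t)))" for t
  define L where "L t v = (\<chi> j. v \<bullet> G t j)" for t v
  have lin: "linear (\<pi> t)" for t unfolding \<pi>_def by (rule op_linear)
  have Lsum: "L t (\<Sum>i\<in>S. a i *\<^sub>R u i) = (\<Sum>i\<in>S. a i *\<^sub>R L t (u i))" for t S a u
    by (simp add: L_def vec_eq_iff inner_sum_left sum_component)
  have \<pi>sum: "\<pi> t (\<Sum>i\<in>S. a i *\<^sub>R u i) = (\<Sum>i\<in>S. a i *\<^sub>R \<pi> t (u i))" for t S a u
    using lin[of t] by (simp add: linear_sum linear_scale)
  have \<pi>L: "\<pi> t v = 0 \<longleftrightarrow> L t v = 0" for t v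
    unfolding \<pi>_def L_def op_zero_iff by (auto simp: vec_eq_iff)
  define \<rho> where "\<rho> = dim (\<pi> t1 ` V)"
  obtain B where B: "B \<subseteq> \<pi> t1 ` V" "independent B" "\<pi> t1 ` V \<subseteq> span B" "card B = \<rho>"
    unfolding \<rho>_def by (rule basis_exists)
  have fB: "finite B" using B(2) by (simp add: finiteI_independent)
  have "\<rho> \<le> dim (span (range (G t1)))"
    unfolding \<rho>_def \<pi>_def by (rule dim_subset) (use op_prop in blast)
  also have "\<dots> \<le> card (range (G t1))" by (rule dim_le_card) auto
  also have "\<dots> \<le> CARD('n)" by (rule card_image_le) simp
  finally have "card B \<le> card (UNIV :: 'n set)" using B by simp
  then obtain S :: "'n set" where S: "card S = card B" "finite S"
    using obtain_subset_with_card_n by blast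
  then obtain e where e: "bij_betw e S B" using finite_same_card_bij fB by blast
  define u where "u i = (SOME v. v \<in> V \<and> \<pi> t1 v = e i)" for i
  have u: "u i \<in> V \<and> \<pi> t1 (u i) = e i" if "i \<in> S" for i
  proof -
    have "e i \<in> \<pi> t1 ` V" using e that B(1) by (auto simp: bij_betw_def)
    then have "\<exists>v. v \<in> V \<and> \<pi> t1 v = e i" by auto
    then show ?thesis unfolding u_def by (rule someI_ex)
  qed
  define w where "w i = L t1 (u i)" for i
  have windep: "\<forall>i\<in>S. a i = 0" if "(\<Sum>i\<in>S. a i *\<^sub>R w i) = 0" for a
  proof
    fix i assume i: "i \<in> S"
    have "L t1 (\<Sum>i\<in>S. a i *\<^sub>R u i) = 0" using that by (simp add: Lsum w_def)
    then have "\<pi> t1 (\<Sum>i\<in>S. a i *\<^sub>R u i) = 0" by (simp add: \<pi>L)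
    then have "(\<Sum>i\<in>S. a i *\<^sub>R e i) = 0" by (simp add: \<pi>sum u cong: sum.cong)
    then show "a i = 0" by (rule bij_indep[OF S(2) e B(2) _ i])
  qed
  define Q where "Q t = (\<chi> l i. if i \<in> S \<and> l \<in> S then L t (u i) \<bullet> w l else if l = i then 1 else (0::real))" for t
  have Qv: "(Q t *v y) $ l = (if l \<in> S then (\<Sum>i\<in>S. y $ i *\<^sub>R L t (u i)) \<bullet> w l else y $ l)" for t y l
  proof (cases "l \<in> S")
    case True
    have "(Q t *v y) $ l = (\<Sum>i\<in>UNIV. (if i \<in> S then L t (u i) \<bullet> w l else 0) * y $ i)"
      unfolding matrix_vector_mult_def Q_def using True by (auto intro!: sum.cong)
    also have "\<dots> = (\<Sum>i\<in>S. (L t (u i) \<bullet> w l) * y $ i)"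
      by (subst sum_UNIV_S[of S]) auto
    also have "\<dots> = (\<Sum>i\<in>S. y $ i *\<^sub>R L t (u i)) \<bullet> w l"
      by (simp add: inner_sum_left mult.commute)
    finally show ?thesis using True by simp
  next
    case False
    have "(Q t *v y) $ l = (\<Sum>i\<in>UNIV. (if l = i then 1 else 0) * y $ i)"
      unfolding matrix_vector_mult_def Q_def using False by (auto intro!: sum.cong)
    also have "\<dots> = (\<Sum>i\<in>UNIV. (if l = i then y $ i else 0))"
      by (rule sum.cong) auto
    finally show ?thesis using False by simp
  qed
  have Qt1: "det (Q t1) \<noteq> 0"
    unfolding det_ker
  proof (intro allI impI)
    fix y assume y: "Q t1 *v y = 0"
    define z where "z = (\<Sum>i\<in>S. y $ i *\<^sub>R w i)"
    have zl: "z \<bullet> w l = 0" if "l \<in> S" for l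
      using y that Qv[of t1 y l] by (simp add: vec_eq_iff z_def w_def)
    have "z \<bullet> z = (\<Sum>l\<in>S. y $ l * (z \<bullet> w l))"
      by (simp add: z_def inner_sum_right mult.commute)
    also have "\<dots> = 0" using zl by simp
    finally have "z = 0" by simp
    then have yS: "\<forall>i\<in>S. y $ i = 0" using windep[of "\<lambda>i. y $ i"] z_def by simp
    have "y $ l = 0" for l
    proof (cases "l \<in> S")
      case True then show ?thesis using yS by simp
    next
      case False then show ?thesis using y Qv[of t1 y l] by (simp add: vec_eq_iff)
    qed
    then show "y = 0" by (simp add: vec_eq_iff)
  qed
  have good: "\<rho> \<le> dim (\<pi> t ` V)" if "det (Q t) \<noteq> 0" for t
  proof -
    have "card S \<le> dim (\<pi> t ` V)"
    proof (rule fam_dim[OF S(2)])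
      show "(\<lambda>i. \<pi> t (u i)) ` S \<subseteq> \<pi> t ` V" using u by auto
      fix a assume a: "(\<Sum>i\<in>S. a i *\<^sub>R \<pi> t (u i)) = 0"
      then have "\<pi> t (\<Sum>i\<in>S. a i *\<^sub>R u i) = 0" by (simp add: \<pi>sum)
      then have L0: "(\<Sum>i\<in>S. a i *\<^sub>R L t (u i)) = 0" by (simp add: \<pi>L Lsum)
      define y where "y = (\<chi> i. if i \<in> S then a i else 0)"
      have ysum: "(\<Sum>i\<in>S. y $ i *\<^sub>R L t (u i)) = 0"
      proof -
        have "(\<Sum>i\<in>S. y $ i *\<^sub>R L t (u i)) = (\<Sum>i\<in>S. a i *\<^sub>R L t (u i))"
          by (rule sum.cong) (auto simp: y_def)
        with L0 show ?thesis by simp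
      qed
      have "(Q t *v y) $ l = 0" for l
      proof (cases "l \<in> S")
        case True then show ?thesis using Qv[of t y l] ysum by simp
      next
        case False then show ?thesis using Qv[of t y l] by (simp add: y_def)
      qed
      then have "Q t *v y = 0" by (simp add: vec_eq_iff)
      then have "y = 0" using that det_ker by blast
      then show "\<forall>i\<in>S. a i = 0" by (simp add: y_def vec_eq_iff) (metis (full_types))
    qed
    then show ?thesis using S B by simp
  qed
  have polQ: "pol CARD('n) (\<lambda>t. det (Q t))"
  proof (rule pol_det)
    fix l i
    show "pol 1 (\<lambda>t. Q t $ l $ i)"
    proof (cases "i \<in> S \<and> l \<in> S")
      case True
      have "pol (1+0) (\<lambda>t. (u i \<bullet> G t j) * w l $ j)" for j
        by (rule pol_mult[OF polG pol_const])
      then have "pol 1 (\<lambda>t. \<Sum>j\<in>UNIV. (u i \<bullet> G t j) * w l $ j)" by (intro pol_sum) auto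
      then show ?thesis using True by (simp add: Q_def L_def inner_vec_def)
    next
      case False
      then have "(\<lambda>t. Q t $ l $ i) = (\<lambda>t. if l = i then 1 else 0)" by (auto simp: Q_def)
      then show ?thesis using pol_const by metis
    qed
  qed
  show ?thesis
  proof (rule pol_nonzero[OF polQ Qt1])
    fix t assume "t \<in> {t. dim (orth_proj (span (range (G t))) ` V) < \<tau>}"
    then have "dim (\<pi> t ` V) < \<rho>" using t1 by (simp add: \<pi>_def \<rho>_def)
    then show "det (Q t) = 0" using good by force
  qed
qed

lemma two_maps_dim:
  fixes f g :: "'a::euclidean_space \<Rightarrow> 'b::euclidean_space"
  assumes lf: "linear f" and lg: "linear g" and V: "subspace V"
    and ker: "\<And>v. v \<in> V \<Longrightarrow> f v = 0 \<Longrightarrow> g v = 0 \<Longrightarrow> v = 0"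
  shows "dim V \<le> dim (f ` V) + dim (g ` V)"
proof -
  define F where "F v = (f v, g v)" for v
  have lF: "linear F"
    by (rule linearI) (simp_all add: F_def linear_add[OF lf] linear_add[OF lg] linear_scale[OF lf] linear_scale[OF lg])
  have "inj_on F (span V)"
  proof (rule inj_onI)
    fix x y assume xy: "x \<in> span V" "y \<in> span V" "F x = F y"
    have sV: "span V = V" using V by (simp add: span_eq_iff)
    have "x - y \<in> V" using xy(1,2) V unfolding sV by (simp add: subspace_diff)
    moreover have "f (x - y) = 0" "g (x - y) = 0" using xy(3)
      by (simp_all add: F_def linear_diff[OF lf] linear_diff[OF lg])
    ultimately have "x - y = 0" by (rule ker)
    then show "x = y" by simp
  qed
  then have "dim (F ` V) = dim V" by (rule dim_image_eq[OF lF])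
  moreover have "dim (F ` V) \<le> dim ((f ` V) \<times> (g ` V))" by (rule dim_subset) (force simp: F_def)
  moreover have "dim ((f ` V) \<times> (g ` V)) = dim (f ` V) + dim (g ` V)"
    by (rule dim_Times) (simp_all add: linear_subspace_image[OF lf V] linear_subspace_image[OF lg V])
  ultimately show ?thesis by simp
qed

theorem mainTheorem18:
  fixes A :: "'n::finite \<Rightarrow> real^'n^'n"
    and V :: "((real^'n) \<times> (real^'n)) set"
  defines "P \<equiv> (\<lambda>k. quad_form (A k))"
  assumes d2: "CARD('n) \<ge> 2"
    and nondeg: "\<exists>t. det (\<chi> k j. partial_deriv j (P k) t) \<noteq> 0"
    and V: "subspace V"
  shows "(odd (dim V) \<longrightarrow>
           in_nonzero_poly_zero_set CARD('n)
             {t. real (dim (orth_proj (Vt P t) ` V)) < (real (dim V) + 1) / 2})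
       \<and> (even (dim V) \<longrightarrow>
           (in_nonzero_poly_zero_set CARD('n)
              {t. real (dim (orth_proj (Vt P t) ` V)) < real (dim V) / 2 + 1})
           \<or> (\<forall>t. real (dim (orth_proj (Vt P t) ` V)) \<ge> real (dim V) / 2))"
proof -
  define c where "c j k = A k *v axis j 1 + transpose (A k) *v axis j 1" for j k
  have pd: "partial_deriv j (P k) t = t \<bullet> c j k" for j k t
    by (simp add: P_def c_def pd_quad)
  define G where "G t j = (axis j (1::real), \<chi> k. partial_deriv j (P k) t)" for t j
  have VtG: "Vt P t = span (range (G t))" for t by (simp add: Vt_def G_def)
  have vG: "v \<bullet> G t j = fst v $ j + (\<Sum>k\<in>UNIV. snd v $ k * (t \<bullet> c j k))" for v t j
  proof -
    have ax: "fst v \<bullet> axis j (1::real) = fst v $ j" by (simp add: inner_axis)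
    show ?thesis unfolding G_def inner_prod_def fst_conv snd_conv ax
      by (simp add: inner_vec_def pd)
  qed
  have polG: "pol 1 (\<lambda>t. v \<bullet> G t j)" for v j
  proof -
    have "pol (0+1) (\<lambda>t. snd v $ k * (t \<bullet> c j k))" for k
      by (rule pol_mult[OF pol_const pol_inner])
    then have "pol 1 (\<lambda>t. \<Sum>k\<in>UNIV. snd v $ k * (t \<bullet> c j k))" by (intro pol_sum) auto
    then have "pol 1 (\<lambda>t. fst v $ j + (\<Sum>k\<in>UNIV. snd v $ k * (t \<bullet> c j k)))"
      by (rule pol_add[OF pol_const])
    then show ?thesis by (simp add: vG)
  qed
  define d where "d t = dim (orth_proj (Vt P t) ` V)" for t
  obtain u where u: "det (\<chi> k j. partial_deriv j (P k) u) \<noteq> 0" using nondeg by blast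
  have KK: "dim V \<le> d t0 + d (t0 + u)" for t0
    unfolding d_def VtG
  proof (rule two_maps_dim[OF op_linear op_linear V])
    fix v assume v: "v \<in> V" "orth_proj (span (range (G t0))) v = 0"
      "orth_proj (span (range (G (t0 + u)))) v = 0"
    then have h0: "v \<bullet> G t0 j = 0" and h1: "v \<bullet> G (t0 + u) j = 0" for j
      by (auto simp: op_zero_iff)
    have hu: "(\<Sum>k\<in>UNIV. snd v $ k * (u \<bullet> c j k)) = 0" for j
    proof -
      have "(\<Sum>k\<in>UNIV. snd v $ k * (u \<bullet> c j k)) = v \<bullet> G (t0 + u) j - v \<bullet> G t0 j"
        by (simp add: vG inner_add_left distrib_left sum.distrib)
      then show ?thesis using h0 h1 by simp
    qed
    define J where "J = (\<chi> k j. partial_deriv j (P k) u)"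
    have "transpose J *v snd v = 0"
      using hu by (simp add: vec_eq_iff J_def transpose_def matrix_vector_mult_def pd mult.commute)
    moreover have "det (transpose J) \<noteq> 0" using u by (simp add: J_def det_transpose)
    ultimately have s0: "snd v = 0" using det_ker by blast
    then have "fst v $ j = 0" for j using h0[of j] by (simp add: vG)
    then have "fst v = 0" by (simp add: vec_eq_iff)
    with s0 show "v = 0" by (simp add: prod_eq_iff)
  qed
  have gen: "in_nonzero_poly_zero_set CARD('n) {t. d t < \<tau>}" if "\<tau> \<le> d t1" for \<tau> t1
    using generic[of G, OF polG, of \<tau> t1 V] that by (simp add: d_def VtG)
  show ?thesis
  proof (intro conjI impI)
    assume "odd (dim V)"
    then obtain q where q: "dim V = 2 * q + 1" by (metis oddE)
    have "q + 1 \<le> d 0 \<or> q + 1 \<le> d (0 + u)" using KK[of 0] q by linarith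
    then obtain t1 where "q + 1 \<le> d t1" by blast
    then have "in_nonzero_poly_zero_set CARD('n) {t. d t < q + 1}" by (rule gen)
    moreover have "{t. d t < q + 1} = {t. real (d t) < (real (dim V) + 1) / 2}"
      using q by auto
    ultimately show "in_nonzero_poly_zero_set CARD('n)
             {t. real (dim (orth_proj (Vt P t) ` V)) < (real (dim V) + 1) / 2}"
      by (simp add: d_def)
  next
    assume "even (dim V)"
    then obtain q where q: "dim V = 2 * q" by (metis evenE)
    show "in_nonzero_poly_zero_set CARD('n)
              {t. real (dim (orth_proj (Vt P t) ` V)) < real (dim V) / 2 + 1}
           \<or> (\<forall>t. real (dim (orth_proj (Vt P t) ` V)) \<ge> real (dim V) / 2)"
    proof (cases "\<forall>t. q \<le> d t")
      case True
      then show ?thesis using q by (auto simp: d_def)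
    next
      case False
      then obtain t0 where "d t0 < q" by (auto simp: not_le)
      then have "q + 1 \<le> d (t0 + u)" using KK[of t0] q by linarith
      then have "in_nonzero_poly_zero_set CARD('n) {t. d t < q + 1}" by (rule gen)
      moreover have "{t. d t < q + 1} = {t. real (d t) < real (dim V) / 2 + 1}"
        using q by auto
      ultimately show ?thesis by (simp add: d_def)
    qed
  qed
qed

end
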